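(* Assume that $(Y,X_1,\dots,X_d)$ has continuous marginal distributions and a Gaussian copula. Let $V=\Phi^{-1}(F_Y(Y))$ and $U_i=\Phi^{-1}(F_{X_i}(X_i))$, $i=1,\dots,d$, so that $(V,U_1,\dots,U_d)$ is Gaussian, and let $a=(a_i)_{i=1}^d$ be a constant vector such that $V=a^\top U+\epsilon$ with $\epsilon$ independent of $U=(U_i)_{i=1}^d$. Then for all $p,q\in(0,1)$, an optimal predictor of $\mathbb{I}(Y>F_Y^{\leftarrow}(p))$ calibrated at level $q$ is $\mathbb{I}(h(X)>F_{h(X)}^{\leftarrow}(q))$, where $h(x)=\sum_{i=1}^d a_i\,\Phi^{-1}(F_{X_i}(x_i))$.
   Context: $\Phi$ is the standard normal distribution function; $F_\xi$ is the distribution function of $\xi$ and $F_\xi^{\leftarrow}(p)=\inf\{y: F_\xi(y)\ge p\}$. A predictor $\mathbb{I}(g(X)>\tau)$ (with $g$ Borel) of an event $\{Y>y_0\}$ is calibrated at level $q$ if $\mathbb{P}(g(X)>\tau)=1-q$; such a predictor is optimal at level $q$ if its precision $\mathbb{P}(Y>y_0\mid g(X)>\tau)$ is at least the precision of every other predictor calibrated at level $q$. *)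

theory Defs
  imports "HOL-Probability.Probability"
begin

definition distr_fun :: "'a measure \<Rightarrow> ('a \<Rightarrow> real) \<Rightarrow> real \<Rightarrow> real" where
  "distr_fun M \<xi> y = measure M {\<omega> \<in> space M. \<xi> \<omega> \<le> y}"

definition gen_inv :: "(real \<Rightarrow> real) \<Rightarrow> real \<Rightarrow> real" where
  "gen_inv F p = Inf {y. F y \<ge> p}"

definition Phi :: "real \<Rightarrow> real" where
  "Phi x = measure (density lborel std_normal_density) {..x}"

definition Phi_inv :: "real \<Rightarrow> real" where
  "Phi_inv p = gen_inv Phi p"

definition normal_score :: "'a measure \<Rightarrow> ('a \<Rightarrow> real) \<Rightarrow> 'a \<Rightarrow> real" where
  "normal_score M \<xi> \<omega> = Phi_inv (distr_fun M \<xi> (\<xi> \<omega>))"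

definition gaussian_rv :: "'a measure \<Rightarrow> ('a \<Rightarrow> real) \<Rightarrow> bool" where
  "gaussian_rv M Z \<longleftrightarrow>
     (\<exists>\<mu> \<sigma>. \<sigma> > 0 \<and> distributed M lborel Z (normal_density \<mu> \<sigma>))
     \<or> (\<exists>c. AE \<omega> in M. Z \<omega> = c)"

text \<open>(Y, X_1..X_d) has a Gaussian copula: the vector of normal scores
  (Phi^{-1}(F_Y(Y)), Phi^{-1}(F_{X_i}(X_i))) is jointly Gaussian, i.e. every
  linear combination is Gaussian.\<close>
definition gaussian_copula :: "'a measure \<Rightarrow> ('a \<Rightarrow> real) \<Rightarrow> ('a \<Rightarrow> real^'d) \<Rightarrow> bool" where
  "gaussian_copula M Y X \<longleftrightarrow>
     (\<forall>c0 (c :: real^'d). gaussian_rv M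
        (\<lambda>\<omega>. c0 * normal_score M Y \<omega> + (\<Sum>i\<in>UNIV. c $ i * normal_score M (\<lambda>\<eta>. X \<eta> $ i) \<omega>)))"

definition calibrated :: "'a measure \<Rightarrow> ('a \<Rightarrow> 'b) \<Rightarrow> ('b \<Rightarrow> real) \<Rightarrow> real \<Rightarrow> real \<Rightarrow> bool" where
  "calibrated M X g \<tau> q \<longleftrightarrow> measure M {\<omega> \<in> space M. g (X \<omega>) > \<tau>} = 1 - q"

definition precision :: "'a measure \<Rightarrow> ('a \<Rightarrow> real) \<Rightarrow> real \<Rightarrow> ('a \<Rightarrow> 'b) \<Rightarrow> ('b \<Rightarrow> real) \<Rightarrow> real \<Rightarrow> real" where
  "precision M Y y0 X g \<tau> =
     measure M {\<omega> \<in> space M. Y \<omega> > y0 \<and> g (X \<omega>) > \<tau>} / measure M {\<omega> \<in> space M. g (X \<omega>) > \<tau>}"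

definition optimal_predictor ::
  "'a measure \<Rightarrow> ('a \<Rightarrow> real) \<Rightarrow> real \<Rightarrow> ('a \<Rightarrow> 'b::topological_space) \<Rightarrow> ('b \<Rightarrow> real) \<Rightarrow> real \<Rightarrow> real \<Rightarrow> bool" where
  "optimal_predictor M Y y0 X g \<tau> q \<longleftrightarrow>
     g \<in> borel_measurable borel \<and> calibrated M X g \<tau> q \<and>
     (\<forall>g' \<tau>'. g' \<in> borel_measurable borel \<and> calibrated M X g' \<tau>' q \<longrightarrow>
         precision M Y y0 X g' \<tau>' \<le> precision M Y y0 X g \<tau>)"

end

theory Submission
  imports Defs
begin

locale cdf_like =
  fixes F :: "real \<Rightarrow> real"
  assumes F_mono: "mono F"
    and F_cont: "\<And>x. isCont F x"
    and F_bot: "(F \<longlongrightarrow> 0) at_bot"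
    and F_top: "(F \<longlongrightarrow> 1) at_top"
    and F_nonneg: "\<And>x. 0 \<le> F x"
    and F_le1: "\<And>x. F x \<le> 1"
begin

sublocale rcm: right_continuous_mono F 0 1
  by standard (auto intro: F_mono F_bot F_top continuous_at_imp_continuous_at_within F_cont)

lemma gi_eq: "gen_inv F u = Inf {x. u \<le> F x}"
  unfolding gen_inv_def by simp

lemma galois: "0 < u \<Longrightarrow> u < 1 \<Longrightarrow> u \<le> F x \<longleftrightarrow> gen_inv F u \<le> x"
  unfolding gi_eq using rcm.pseudoinverse by blast

lemma F_gi: assumes "0 < u" "u < 1" shows "F (gen_inv F u) = u"
proof (rule antisym)
  show "u \<le> F (gen_inv F u)" using galois[OF assms] by simp
  have "(F \<longlongrightarrow> F (gen_inv F u)) (at_left (gen_inv F u))"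
    using F_cont[of "gen_inv F u"] by (simp add: isCont_def filterlim_at_split)
  moreover have "eventually (\<lambda>x. F x \<le> u) (at_left (gen_inv F u))"
    using galois[OF assms] unfolding eventually_at_left_field
    by (intro exI[of _ "gen_inv F u - 1"]) (auto, metis linorder_not_le less_imp_le)
  ultimately show "F (gen_inv F u) \<le> u"
    by (rule tendsto_upperbound) simp
qed

lemma gi_mono: "mono_on {0<..<1} (gen_inv F)"
  using rcm.mono_I unfolding gi_eq[abs_def] by simp

lemma gi_measurable: "gen_inv F \<in> borel_measurable borel"
proof (rule borel_measurable_piecewise_mono[of "{{..0},{0<..<1},{1},{1<..}}"])
  fix c :: "real set" assume c: "c \<in> {{..0},{0<..<1},{1},{1<..}}"
  have lo: "gen_inv F u = Inf UNIV" if "u \<le> 0" for u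
    unfolding gen_inv_def using that F_nonneg order_trans by (metis (mono_tags) UNIV_eq_I mem_Collect_eq)
  have hi: "gen_inv F u = Inf {}" if "1 < u" for u
    unfolding gen_inv_def using that F_le1 by (metis (mono_tags) empty_Collect_eq linorder_not_le order_le_less_trans)
  show "mono_on c (gen_inv F)"
    using c gi_mono by (auto intro!: mono_onI simp: lo hi mono_onD)
qed auto

end


context prob_space begin

lemma distr_fun_cdf:
  assumes "random_variable borel \<xi>"
  shows "distr_fun M \<xi> = cdf (distr M borel \<xi>)"
proof
  fix y
  have "{\<omega>\<in>space M. \<xi> \<omega> \<le> y} = \<xi> -` {..y} \<inter> space M" by auto
  then show "distr_fun M \<xi> y = cdf (distr M borel \<xi>) y"
    using assms by (simp add: distr_fun_def cdf_def measure_distr)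
qed

lemma distr_fun_cdf_like:
  assumes "random_variable borel \<xi>" "\<And>x. isCont (distr_fun M \<xi>) x"
  shows "cdf_like (distr_fun M \<xi>)"
proof -
  interpret D: real_distribution "distr M borel \<xi>" using assms by simp
  show ?thesis unfolding distr_fun_cdf[OF assms(1)]
    apply standard
    using assms(2) unfolding distr_fun_cdf[OF assms(1)]
    by (auto intro: monoI D.cdf_nondecreasing D.cdf_lim_at_bot D.cdf_lim_at_top_prob D.cdf_nonneg D.cdf_bounded_prob)
qed

lemma distr_fun_atom:
  assumes "random_variable borel \<xi>" "\<And>x. isCont (distr_fun M \<xi>) x"
  shows "prob {\<omega>\<in>space M. \<xi> \<omega> = x} = 0"
proof -
  interpret D: real_distribution "distr M borel \<xi>" using assms by simp
  have "measure (distr M borel \<xi>) {x} = 0"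
    using assms(2)[of x] unfolding distr_fun_cdf[OF assms(1)] D.isCont_cdf .
  moreover have "\<xi> -` {x} \<inter> space M = {\<omega>\<in>space M. \<xi> \<omega> = x}" by auto
  ultimately show ?thesis using assms(1) by (simp add: measure_distr)
qed

lemma distr_fun_meas:
  assumes "random_variable borel \<xi>" "\<And>x. isCont (distr_fun M \<xi>) x"
  shows "(\<lambda>\<omega>. distr_fun M \<xi> (\<xi> \<omega>)) \<in> borel_measurable M"
proof -
  interpret F: cdf_like "distr_fun M \<xi>" by (rule distr_fun_cdf_like[OF assms])
  have "distr_fun M \<xi> \<in> borel_measurable borel" by (intro borel_measurable_mono F.F_mono)
  then show ?thesis using assms(1) by (rule measurable_compose[rotated])
qed

end


context prob_space begin

lemma distr_fun_ge:
  assumes rv: "random_variable borel \<xi>" and c: "\<And>x. isCont (distr_fun M \<xi>) x"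
    and u: "0 < u" "u < 1"
  shows "prob {\<omega>\<in>space M. u \<le> distr_fun M \<xi> (\<xi> \<omega>)} = 1 - u"
proof -
  interpret F: cdf_like "distr_fun M \<xi>" by (rule distr_fun_cdf_like[OF rv c])
  let ?t = "gen_inv (distr_fun M \<xi>) u"
  have e1: "{\<omega>\<in>space M. \<xi> \<omega> \<le> ?t} \<in> events" using rv by measurable
  have e2: "{\<omega>\<in>space M. \<xi> \<omega> = ?t} \<in> events" using rv by measurable
  have "{\<omega>\<in>space M. u \<le> distr_fun M \<xi> (\<xi> \<omega>)} = {\<omega>\<in>space M. ?t \<le> \<xi> \<omega>}"
    using F.galois[OF u] by auto
  also have "\<dots> = space M - ({\<omega>\<in>space M. \<xi> \<omega> \<le> ?t} - {\<omega>\<in>space M. \<xi> \<omega> = ?t})"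
    by auto
  also have "prob \<dots> = 1 - prob ({\<omega>\<in>space M. \<xi> \<omega> \<le> ?t} - {\<omega>\<in>space M. \<xi> \<omega> = ?t})"
    using e1 e2 by (intro prob_compl) auto
  also have "prob ({\<omega>\<in>space M. \<xi> \<omega> \<le> ?t} - {\<omega>\<in>space M. \<xi> \<omega> = ?t})
      = prob {\<omega>\<in>space M. \<xi> \<omega> \<le> ?t} - prob {\<omega>\<in>space M. \<xi> \<omega> = ?t}"
    using e1 e2 by (intro finite_measure_Diff) auto
  also have "\<dots> = u"
    using distr_fun_atom[OF rv c] F.F_gi[OF u] by (simp add: distr_fun_def)
  finally show ?thesis .
qed


lemma distr_fun_no_atom:
  assumes rv: "random_variable borel \<xi>" and c: "\<And>x. isCont (distr_fun M \<xi>) x"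
  shows "prob {\<omega>\<in>space M. distr_fun M \<xi> (\<xi> \<omega>) = v} = 0"
proof -
  interpret F: cdf_like "distr_fun M \<xi>" by (rule distr_fun_cdf_like[OF rv c])
  let ?F = "distr_fun M \<xi>"
  have fm: "(\<lambda>\<omega>. ?F (\<xi> \<omega>)) \<in> borel_measurable M" by (rule distr_fun_meas[OF rv c])
  have evw: "{\<omega>\<in>space M. w \<le> ?F (\<xi> \<omega>)} \<in> events" for w
    using fm by measurable
  let ?E = "{\<omega>\<in>space M. ?F (\<xi> \<omega>) = v}"
  have ev: "?E \<in> events" using fm by measurable
  have "prob ?E \<le> 0"
  proof (cases "0 < v \<and> v < 1")
    case True
    show ?thesis
    proof (rule field_le_epsilon)
      fix e :: real assume e: "0 < e"
      define w where "w = min (v + e) ((v + 1) / 2)"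
      have w: "v < w" "w < 1" "w - v \<le> e" using True e unfolding w_def by (auto simp: min_def)
      have "?E \<subseteq> {\<omega>\<in>space M. v \<le> ?F (\<xi> \<omega>)} - {\<omega>\<in>space M. w \<le> ?F (\<xi> \<omega>)}" using w by auto
      then have "prob ?E \<le> prob ({\<omega>\<in>space M. v \<le> ?F (\<xi> \<omega>)} - {\<omega>\<in>space M. w \<le> ?F (\<xi> \<omega>)})"
        using evw by (intro finite_measure_mono) auto
      also have "\<dots> = prob {\<omega>\<in>space M. v \<le> ?F (\<xi> \<omega>)} - prob {\<omega>\<in>space M. w \<le> ?F (\<xi> \<omega>)}"
        using evw w by (intro finite_measure_Diff) auto
      also have "\<dots> = (1 - v) - (1 - w)"
        using True w by (simp add: distr_fun_ge[OF rv c])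
      finally show "prob ?E \<le> 0 + e" using w by simp
    qed
  next
    case False
    then consider "v \<le> 0" | "1 \<le> v" by linarith
    then show ?thesis
    proof cases
      case 1
      show ?thesis
      proof (rule field_le_epsilon)
        fix e :: real assume e: "0 < e"
        define w where "w = min e (1/2)"
        have w: "0 < w" "w < 1" "w \<le> e" using e by (auto simp: w_def)
        have "?E \<subseteq> space M - {\<omega>\<in>space M. w \<le> ?F (\<xi> \<omega>)}" using w 1 by auto
        then have "prob ?E \<le> prob (space M - {\<omega>\<in>space M. w \<le> ?F (\<xi> \<omega>)})"
          using evw by (intro finite_measure_mono) auto
        also have "\<dots> = 1 - prob {\<omega>\<in>space M. w \<le> ?F (\<xi> \<omega>)}"
          using evw by (intro prob_compl)
        also have "\<dots> = 1 - (1 - w)"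
          using w by (simp add: distr_fun_ge[OF rv c])
        finally show "prob ?E \<le> 0 + e" using w by simp
      qed
    next
      case 2
      show ?thesis
      proof (rule field_le_epsilon)
        fix e :: real assume e: "0 < e"
        define w where "w = max (1 - e) (1/2)"
        have w: "0 < w" "w < 1" "1 - w \<le> e" using e by (auto simp: w_def)
        have "?E \<subseteq> {\<omega>\<in>space M. w \<le> ?F (\<xi> \<omega>)}" using w 2 by auto
        then have "prob ?E \<le> prob {\<omega>\<in>space M. w \<le> ?F (\<xi> \<omega>)}"
          using evw by (intro finite_measure_mono) auto
        also have "\<dots> = 1 - w"
          using w by (simp add: distr_fun_ge[OF rv c])
        finally show "prob ?E \<le> 0 + e" using w by simp
      qed
    qed
  qed
  then show ?thesis using measure_nonneg[of M ?E] by linarith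
qed

lemma AE_distr_fun_ne:
  assumes rv: "random_variable borel \<xi>" and c: "\<And>x. isCont (distr_fun M \<xi>) x"
  shows "AE \<omega> in M. distr_fun M \<xi> (\<xi> \<omega>) \<noteq> v"
proof -
  have fm: "(\<lambda>\<omega>. distr_fun M \<xi> (\<xi> \<omega>)) \<in> borel_measurable M" by (rule distr_fun_meas[OF rv c])
  have ev: "{\<omega>\<in>space M. distr_fun M \<xi> (\<xi> \<omega>) = v} \<in> events" using fm by measurable
  show ?thesis
    by (subst AE_iff_measurable[OF ev]) (auto simp: emeasure_eq_measure distr_fun_no_atom[OF rv c])
qed

lemma AE_distr_fun_01:
  assumes rv: "random_variable borel \<xi>" and c: "\<And>x. isCont (distr_fun M \<xi>) x"
  shows "AE \<omega> in M. 0 < distr_fun M \<xi> (\<xi> \<omega>) \<and> distr_fun M \<xi> (\<xi> \<omega>) < 1"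
proof -
  interpret F: cdf_like "distr_fun M \<xi>" by (rule distr_fun_cdf_like[OF rv c])
  show ?thesis
    using AE_distr_fun_ne[OF rv c, of 0] AE_distr_fun_ne[OF rv c, of 1]
  proof eventually_elim
    case (elim \<omega>)
    then show ?case using F.F_nonneg[of "\<xi> \<omega>"] F.F_le1[of "\<xi> \<omega>"] by linarith
  qed
qed

lemma AE_gi_distr_fun:
  assumes rv: "random_variable borel \<xi>" and c: "\<And>x. isCont (distr_fun M \<xi>) x"
  shows "AE \<omega> in M. gen_inv (distr_fun M \<xi>) (distr_fun M \<xi> (\<xi> \<omega>)) = \<xi> \<omega>"
proof -
  interpret F: cdf_like "distr_fun M \<xi>" by (rule distr_fun_cdf_like[OF rv c])
  let ?F = "distr_fun M \<xi>"
  have "AE \<omega> in M. \<forall>r\<in>\<rat>. ?F (\<xi> \<omega>) \<noteq> ?F r"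
    by (subst AE_ball_countable) (auto intro: countable_rat AE_distr_fun_ne[OF rv c])
  with AE_distr_fun_01[OF rv c] show ?thesis
  proof eventually_elim
    case (elim \<omega>)
    let ?u = "?F (\<xi> \<omega>)"
    have u: "0 < ?u" "?u < 1" using elim by auto
    have le: "gen_inv ?F ?u \<le> \<xi> \<omega>" using F.galois[OF u, of "\<xi> \<omega>"] by simp
    show ?case
    proof (rule ccontr)
      assume "gen_inv ?F ?u \<noteq> \<xi> \<omega>"
      with le have "gen_inv ?F ?u < \<xi> \<omega>" by simp
      then obtain r where r: "r \<in> \<rat>" "gen_inv ?F ?u < r" "r < \<xi> \<omega>" using Rats_dense_in_real by blast
      then have "?u \<le> ?F r" using F.galois[OF u, of r] by simp
      moreover have "?F r \<le> ?u" using r F.F_mono by (simp add: monoD)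
      ultimately show False using elim r by auto
    qed
  qed
qed
end


lemma Phi_real_distribution: "real_distribution (density lborel std_normal_density)"
  unfolding real_distribution_def real_distribution_axioms_def
  using prob_space_normal_density by auto

lemma Phi_cdf: "Phi = cdf (density lborel std_normal_density)"
  by (auto simp: Phi_def cdf_def)

lemma Phi_cdf_like: "cdf_like Phi"
proof -
  interpret D: real_distribution "density lborel std_normal_density" by (rule Phi_real_distribution)
  have atom: "measure (density lborel std_normal_density) {x} = 0" for x
  proof -
    have "{x} \<in> null_sets lborel" by (rule finite_imp_null_set_lborel) simp
    then have "emeasure (density lborel std_normal_density) {x} = 0"
      by (subst emeasure_density) (auto intro: nn_integral_null_set)
    then show ?thesis by (simp add: measure_def)
  qed
  show ?thesis unfolding Phi_cdf
    by standard (auto intro: monoI D.cdf_nondecreasing D.cdf_lim_at_bot D.cdf_lim_at_top_prob D.cdf_nonneg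
       D.cdf_bounded_prob simp: D.isCont_cdf atom)
qed

lemma Phi_inv_measurable: "Phi_inv \<in> borel_measurable borel"
proof -
  interpret cdf_like Phi by (rule Phi_cdf_like)
  show ?thesis using gi_measurable by (simp add: Phi_inv_def[abs_def])
qed



lemma vec_nth_measurable: "(\<lambda>x::real^'d. x $ i) \<in> borel_measurable borel"
proof -
  have "(\<lambda>x::real^'d. x $ i) = (\<lambda>x. x \<bullet> axis i 1)" by (simp add: inner_axis)
  moreover have "(\<lambda>x::real^'d. x \<bullet> axis i 1) \<in> borel_measurable borel" by measurable
  ultimately show ?thesis by simp
qed

lemma measurable_vec:
  fixes f :: "'a \<Rightarrow> real^'d"
  assumes "\<And>i. (\<lambda>x. f x $ i) \<in> borel_measurable N"
  shows "f \<in> borel_measurable N"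
proof (subst borel_measurable_euclidean_space, intro ballI)
  fix b :: "real^'d" assume "b \<in> Basis"
  then obtain i where b: "b = axis i 1" by (auto simp: Basis_vec_def)
  show "(\<lambda>x. f x \<bullet> b) \<in> borel_measurable N" using assms[of i] by (simp add: b inner_axis)
qed

context prob_space begin

lemma isCont_distr_fun_no_atom:
  assumes rv: "random_variable borel \<xi>" and na: "\<And>x. prob {\<omega>\<in>space M. \<xi> \<omega> = x} = 0"
  shows "isCont (distr_fun M \<xi>) x"
proof -
  interpret D: real_distribution "distr M borel \<xi>" using rv by simp
  have "\<xi> -` {x} \<inter> space M = {\<omega>\<in>space M. \<xi> \<omega> = x}" by auto
  then have "measure (distr M borel \<xi>) {x} = 0" using rv na by (simp add: measure_distr)
  then show ?thesis unfolding distr_fun_cdf[OF rv] D.isCont_cdf .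
qed

lemma distributed_no_atom:
  assumes "distributed M lborel \<xi> f"
  shows "prob {\<omega>\<in>space M. \<xi> \<omega> = x} = 0"
proof -
  have d: "distr M lborel \<xi> = density lborel f" and fm: "f \<in> borel_measurable lborel"
    and rv: "\<xi> \<in> measurable M lborel"
    using assms by (auto simp: distributed_def)
  have "{x} \<in> null_sets lborel" by (rule finite_imp_null_set_lborel) simp
  then have "emeasure (density lborel f) {x} = 0"
    using fm by (subst emeasure_density) (auto intro: nn_integral_null_set)
  then have "measure (distr M lborel \<xi>) {x} = 0" by (simp add: d measure_def)
  moreover have "\<xi> -` {x} \<inter> space M = {\<omega>\<in>space M. \<xi> \<omega> = x}" by auto
  ultimately show ?thesis using rv by (simp add: measure_distr)
qed

end


theorem corollary1:
  fixes M :: "'a measure" and Y :: "'a \<Rightarrow> real" and X :: "'a \<Rightarrow> real^'d"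
    and a :: "real^'d" and \<epsilon> :: "'a \<Rightarrow> real" and p q :: real
  assumes "prob_space M"
    and "Y \<in> borel_measurable M" and "X \<in> borel_measurable M"
    and "\<And>y. isCont (distr_fun M Y) y"
    and "\<And>i y. isCont (distr_fun M (\<lambda>\<omega>. X \<omega> $ i)) y"
    and "gaussian_copula M Y X"
    and "\<epsilon> \<in> borel_measurable M"
    and "prob_space.indep_set M (sets (vimage_algebra (space M) \<epsilon> borel))
           (sets (vimage_algebra (space M)
              (\<lambda>\<omega>. \<chi> i. normal_score M (\<lambda>\<eta>. X \<eta> $ i) \<omega>) (borel :: (real^'d) measure)))"
    and "AE \<omega> in M. normal_score M Y \<omega> =
           (\<Sum>i\<in>UNIV. a $ i * normal_score M (\<lambda>\<eta>. X \<eta> $ i) \<omega>) + \<epsilon> \<omega>"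
    and "\<not> (\<exists>c. AE \<omega> in M. (\<Sum>i\<in>UNIV. a $ i * normal_score M (\<lambda>\<eta>. X \<eta> $ i) \<omega>) = c)"
    and "0 < p" and "p < 1" and "0 < q" and "q < 1"
  shows "let h = (\<lambda>x :: real^'d. \<Sum>i\<in>UNIV. a $ i * Phi_inv (distr_fun M (\<lambda>\<eta>. X \<eta> $ i) (x $ i)))
         in optimal_predictor M Y (gen_inv (distr_fun M Y) p) X h
              (gen_inv (distr_fun M (\<lambda>\<omega>. h (X \<omega>))) q) q"
proof -
  interpret P: prob_space M by fact
  interpret Phi: cdf_like Phi by (rule Phi_cdf_like)
  note Xm = assms(3) and Ym = assms(2) and em = assms(7)
  define U where "U = (\<lambda>\<omega>. \<chi> i. normal_score M (\<lambda>\<eta>. X \<eta> $ i) \<omega>)"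
  note indep = assms(8)[folded U_def]
  define h where "h = (\<lambda>x :: real^'d. \<Sum>i\<in>UNIV. a $ i * Phi_inv (distr_fun M (\<lambda>\<eta>. X \<eta> $ i) (x $ i)))"
  define S where "S = (\<lambda>\<omega>. h (X \<omega>))"
  define FY where "FY = distr_fun M Y"
  define y0 where "y0 = gen_inv FY p"
  define v0 where "v0 = Phi_inv p"
  define \<tau> where "\<tau> = gen_inv (distr_fun M S) q"
  have S_eq: "S \<omega> = (\<Sum>i\<in>UNIV. a $ i * normal_score M (\<lambda>\<eta>. X \<eta> $ i) \<omega>)" for \<omega>
    by (simp add: S_def h_def normal_score_def)
  have S_U: "S \<omega> = (\<Sum>i\<in>UNIV. a $ i * U \<omega> $ i)" for \<omega>
    by (simp add: S_eq U_def)
  have Xi_rv: "(\<lambda>\<eta>. X \<eta> $ i) \<in> borel_measurable M" for i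
    using Xm vec_nth_measurable by (rule measurable_compose)
  have Fi_like: "cdf_like (distr_fun M (\<lambda>\<eta>. X \<eta> $ i))" for i
    using P.distr_fun_cdf_like[OF Xi_rv assms(5)] .
  have Fi_meas: "distr_fun M (\<lambda>\<eta>. X \<eta> $ i) \<in> borel_measurable borel" for i
    using Fi_like[of i] by (intro borel_measurable_mono cdf_like.F_mono)
  have h_meas: "h \<in> borel_measurable borel"
    unfolding h_def
    by (intro borel_measurable_sum borel_measurable_times borel_measurable_const
        measurable_compose[OF _ Phi_inv_measurable] measurable_compose[OF vec_nth_measurable Fi_meas])
  have S_rv: "S \<in> borel_measurable M"
    unfolding S_def using Xm h_meas by (rule measurable_compose)

  have gS: "gaussian_rv M S"
  proof -
    have "gaussian_rv M (\<lambda>\<omega>. 0 * normal_score M Y \<omega> + (\<Sum>i\<in>UNIV. a $ i * normal_score M (\<lambda>\<eta>. X \<eta> $ i) \<omega>))"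
      using assms(6) unfolding gaussian_copula_def by blast
    moreover have "(\<lambda>\<omega>. 0 * normal_score M Y \<omega> + (\<Sum>i\<in>UNIV. a $ i * normal_score M (\<lambda>\<eta>. X \<eta> $ i) \<omega>)) = S"
      by (simp add: S_eq fun_eq_iff)
    ultimately show ?thesis by simp
  qed
  have nc: "\<not> (\<exists>c. AE \<omega> in M. S \<omega> = c)" using assms(10) by (simp add: S_eq)
  obtain \<mu> \<sigma> where "distributed M lborel S (normal_density \<mu> \<sigma>)"
    using gS nc unfolding gaussian_rv_def by blast
  then have S_na: "P.prob {\<omega>\<in>space M. S \<omega> = x} = 0" for x by (rule P.distributed_no_atom)
  have S_cont: "isCont (distr_fun M S) x" for x
    using P.isCont_distr_fun_no_atom[OF S_rv S_na] .
  interpret FS: cdf_like "distr_fun M S" by (rule P.distr_fun_cdf_like[OF S_rv S_cont])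
  define T where "T = {\<omega>\<in>space M. \<tau> < S \<omega>}"
  have T_ev: "T \<in> P.events" unfolding T_def using S_rv by measurable
  have PT: "P.prob T = 1 - q"
  proof -
    have "T = space M - {\<omega>\<in>space M. S \<omega> \<le> \<tau>}" by (auto simp: T_def)
    moreover have "{\<omega>\<in>space M. S \<omega> \<le> \<tau>} \<in> P.events" using S_rv by measurable
    ultimately have "P.prob T = 1 - distr_fun M S \<tau>" by (simp add: P.prob_compl distr_fun_def)
    then show ?thesis using FS.F_gi[of q] assms(13,14) by (simp add: \<tau>_def)
  qed

  interpret FY: cdf_like FY unfolding FY_def by (rule P.distr_fun_cdf_like[OF Ym assms(4)])
  define B where "B = {\<omega>\<in>space M. y0 < Y \<omega>}"
  define B' where "B' = {\<omega>\<in>space M. v0 < S \<omega> + \<epsilon> \<omega>}"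
  have B_ev: "B \<in> P.events" unfolding B_def using Ym by measurable
  have B'_ev: "B' \<in> P.events" unfolding B'_def using S_rv em by measurable
  have AE_B: "AE \<omega> in M. (y0 < Y \<omega>) = (v0 < S \<omega> + \<epsilon> \<omega>)"
    using P.AE_distr_fun_01[OF Ym assms(4)] P.AE_distr_fun_ne[OF Ym assms(4), of p] assms(9)
  proof eventually_elim
    case (elim \<omega>)
    let ?u = "FY (Y \<omega>)"
    have u: "0 < ?u" "?u < 1" "?u \<noteq> p" using elim by (auto simp: FY_def)
    have p: "0 < p" "p < 1" using assms(11,12) by auto
    have 1: "(y0 < Y \<omega>) = (p < ?u)"
    proof
      assume "y0 < Y \<omega>"
      then have "p \<le> ?u" using FY.galois[OF p, of "Y \<omega>"] by (simp add: y0_def)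
      then show "p < ?u" using u by simp
    next
      assume "p < ?u"
      then have "y0 \<le> Y \<omega>" using FY.galois[OF p, of "Y \<omega>"] by (simp add: y0_def)
      moreover have "Y \<omega> \<noteq> y0" using FY.F_gi[OF p] u by (auto simp: y0_def)
      ultimately show "y0 < Y \<omega>" by simp
    qed
    have 2: "(v0 < Phi_inv ?u) = (p < ?u)"
    proof -
      have "(Phi_inv ?u \<le> v0) = (?u \<le> Phi v0)" using Phi.galois[OF u(1,2), of v0] by (simp add: Phi_inv_def)
      also have "Phi v0 = p" using Phi.F_gi[OF p] by (simp add: v0_def Phi_inv_def)
      finally show ?thesis by (simp add: not_le[symmetric])
    qed
    have "normal_score M Y \<omega> = Phi_inv ?u" by (simp add: normal_score_def FY_def)
    then show ?case using 1 2 elim(3) S_eq[of \<omega>] by simp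
  qed
  define R where "R = (\<lambda>u::real^'d. \<chi> i. gen_inv (distr_fun M (\<lambda>\<eta>. X \<eta> $ i)) (Phi (u $ i)))"
  have R_meas: "R \<in> borel_measurable borel"
    unfolding R_def
  proof (rule measurable_vec)
    fix i
    have Phi_meas: "Phi \<in> borel_measurable borel" by (intro borel_measurable_mono Phi.F_mono)
    show "(\<lambda>x. (\<chi> i. gen_inv (distr_fun M (\<lambda>\<eta>. X \<eta> $ i)) (Phi (x $ i))) $ i) \<in> borel_measurable borel"
      by (simp, intro measurable_compose[OF _ cdf_like.gi_measurable[OF Fi_like]]
           measurable_compose[OF vec_nth_measurable Phi_meas])
  qed
  have AE_R: "AE \<omega> in M. X \<omega> = R (U \<omega>)"
  proof -
    have "AE \<omega> in M. \<forall>i\<in>UNIV. X \<omega> $ i = R (U \<omega>) $ i"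
    proof (subst AE_ball_countable[OF countable_finite[OF finite]], intro ballI)
      fix i
      let ?F = "distr_fun M (\<lambda>\<eta>. X \<eta> $ i)"
      show "AE \<omega> in M. X \<omega> $ i = R (U \<omega>) $ i"
        using P.AE_distr_fun_01[OF Xi_rv[of i] assms(5)[where i=i]] P.AE_gi_distr_fun[OF Xi_rv[of i] assms(5)[where i=i]]
      proof eventually_elim
        case (elim \<omega>)
        have "R (U \<omega>) $ i = gen_inv ?F (Phi (Phi_inv (?F (X \<omega> $ i))))"
          by (simp add: R_def U_def normal_score_def)
        also have "Phi (Phi_inv (?F (X \<omega> $ i))) = ?F (X \<omega> $ i)"
          using Phi.F_gi elim(1) by (simp add: Phi_inv_def)
        finally show ?case using elim(2) by simp
      qed
    qed
    then show ?thesis by eventually_elim (simp add: vec_eq_iff)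
  qed

  have indep_ev: "P.prob (a1 \<inter> b1) = P.prob a1 * P.prob b1"
    if "a1 \<in> sets (vimage_algebra (space M) \<epsilon> borel)" "b1 \<in> sets (vimage_algebra (space M) U borel)" for a1 b1
    using P.indep_setD[OF indep that] .
  have U_ev: "b1 \<in> P.events" if "b1 \<in> sets (vimage_algebra (space M) U borel)" for b1
    using P.indep_setD_ev2[OF indep] that by blast
  define Dt where "Dt = {u::real^'d. \<tau> < (\<Sum>i\<in>UNIV. a $ i * u $ i)}"
  have Dt_b: "Dt \<in> sets borel"
  proof -
    have "(\<lambda>u::real^'d. (\<Sum>i\<in>UNIV. a $ i * u $ i)) \<in> borel_measurable borel"
      by (intro borel_measurable_sum borel_measurable_times borel_measurable_const vec_nth_measurable)
    then show ?thesis unfolding Dt_def by measurable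
  qed
  have T_U: "T = U -` Dt \<inter> space M" by (auto simp: T_def Dt_def S_U)
  define E where "E = \<epsilon> -` {v0 - \<tau><..} \<inter> space M"
  have E_sig: "E \<in> sets (vimage_algebra (space M) \<epsilon> borel)" unfolding E_def by (rule in_vimage_algebra) simp
  have E_ev: "E \<in> P.events" unfolding E_def using em by measurable
  have main: "precision M Y y0 X g' \<tau>' \<le> precision M Y y0 X h \<tau>"
    if g'm: "g' \<in> borel_measurable borel" and cal: "calibrated M X g' \<tau>' q" for g' :: "real^'d \<Rightarrow> real" and \<tau>'
  proof -
    define A where "A = {\<omega>\<in>space M. \<tau>' < g' (X \<omega>)}"
    have A_ev: "A \<in> P.events" unfolding A_def using Xm g'm by measurable
    have PA: "P.prob A = 1 - q" using cal by (simp add: calibrated_def A_def)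
    define D' where "D' = {u. \<tau>' < g' (R u)}"
    have D'_b: "D' \<in> sets borel"
    proof -
      have "(\<lambda>u. g' (R u)) \<in> borel_measurable borel" using R_meas g'm by (rule measurable_compose)
      then show ?thesis unfolding D'_def by measurable
    qed
    define A' where "A' = U -` D' \<inter> space M"
    have sig1: "A' - T \<in> sets (vimage_algebra (space M) U borel)"
    proof -
      have "A' - T = U -` (D' - Dt) \<inter> space M" by (auto simp: A'_def T_U)
      then show ?thesis using D'_b Dt_b by (auto intro!: in_vimage_algebra)
    qed
    have sig2: "T - A' \<in> sets (vimage_algebra (space M) U borel)"
    proof -
      have "T - A' = U -` (Dt - D') \<inter> space M" by (auto simp: A'_def T_U)
      then show ?thesis using D'_b Dt_b by (auto intro!: in_vimage_algebra)
    qed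
    have A'_ev: "A' \<in> P.events" unfolding A'_def using D'_b by (intro U_ev in_vimage_algebra)
    have AE_A: "AE \<omega> in M. (\<omega> \<in> A) = (\<omega> \<in> A')"
      using AE_R by eventually_elim (auto simp: A_def A'_def D'_def)
    have PA': "P.prob A' = 1 - q"
      using measure_eq_AE[OF AE_A A_ev A'_ev] PA by simp
    have eq1: "P.prob (B \<inter> A) = P.prob (B' \<inter> A')"
    proof (rule measure_eq_AE)
      show "AE \<omega> in M. (\<omega> \<in> B \<inter> A) = (\<omega> \<in> B' \<inter> A')"
        using AE_A AE_B by eventually_elim (auto simp: B_def B'_def)
    qed (use B_ev A_ev B'_ev A'_ev in auto)
    have eq2: "P.prob (B \<inter> T) = P.prob (B' \<inter> T)"
    proof (rule measure_eq_AE)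
      show "AE \<omega> in M. (\<omega> \<in> B \<inter> T) = (\<omega> \<in> B' \<inter> T)"
        using AE_B by eventually_elim (auto simp: B_def B'_def)
    qed (use B_ev T_ev B'_ev in auto)
    have d1: "P.prob (B' \<inter> A') = P.prob (B' \<inter> A' \<inter> T) + P.prob (B' \<inter> (A' - T))"
    proof -
      have "B' \<inter> A' = (B' \<inter> A' \<inter> T) \<union> (B' \<inter> (A' - T))" by auto
      moreover have "P.prob ((B' \<inter> A' \<inter> T) \<union> (B' \<inter> (A' - T))) = P.prob (B' \<inter> A' \<inter> T) + P.prob (B' \<inter> (A' - T))"
        using B'_ev A'_ev T_ev by (intro P.finite_measure_Union) auto
      ultimately show ?thesis by simp
    qed

    have d2: "P.prob (B' \<inter> T) = P.prob (B' \<inter> A' \<inter> T) + P.prob (B' \<inter> (T - A'))"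
    proof -
      have "B' \<inter> T = (B' \<inter> A' \<inter> T) \<union> (B' \<inter> (T - A'))" by auto
      moreover have "P.prob ((B' \<inter> A' \<inter> T) \<union> (B' \<inter> (T - A'))) = P.prob (B' \<inter> A' \<inter> T) + P.prob (B' \<inter> (T - A'))"
        using B'_ev A'_ev T_ev by (intro P.finite_measure_Union) auto
      ultimately show ?thesis by simp
    qed
    have s1: "P.prob (B' \<inter> (A' - T)) \<le> P.prob (E \<inter> (A' - T))"
    proof (rule P.finite_measure_mono)
      show "B' \<inter> (A' - T) \<subseteq> E \<inter> (A' - T)"
        by (auto simp: B'_def E_def T_def)
      show "E \<inter> (A' - T) \<in> P.events" using E_ev A'_ev T_ev by auto
    qed
    have s2: "P.prob (E \<inter> (T - A')) \<le> P.prob (B' \<inter> (T - A'))"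
    proof (rule P.finite_measure_mono)
      show "E \<inter> (T - A') \<subseteq> B' \<inter> (T - A')"
        by (auto simp: B'_def E_def T_def)
      show "B' \<inter> (T - A') \<in> P.events" using B'_ev A'_ev T_ev by auto
    qed
    have m1: "P.prob (A' - T) = P.prob A' - P.prob (A' \<inter> T)"
      using A'_ev T_ev by (rule P.finite_measure_Diff')
    have m2: "P.prob (T - A') = P.prob T - P.prob (T \<inter> A')"
      using T_ev A'_ev by (rule P.finite_measure_Diff')
    have m3: "P.prob (A' - T) = P.prob (T - A')"
      using m1 m2 PA' PT by (simp add: Int_commute)
    have key: "P.prob (B \<inter> A) \<le> P.prob (B \<inter> T)"
      using eq1 eq2 d1 d2 s1 s2 m3 indep_ev[OF E_sig sig1] indep_ev[OF E_sig sig2] by simp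
    have setA: "{\<omega> \<in> space M. y0 < Y \<omega> \<and> \<tau>' < g' (X \<omega>)} = B \<inter> A" by (auto simp: A_def B_def)
    have setT: "{\<omega> \<in> space M. y0 < Y \<omega> \<and> \<tau> < h (X \<omega>)} = B \<inter> T" by (auto simp: T_def B_def S_def)
    have setT2: "{\<omega> \<in> space M. \<tau> < h (X \<omega>)} = T" by (auto simp: T_def S_def)
    have "0 < 1 - q" using assms(14) by simp
    then show ?thesis unfolding precision_def setA setT setT2 using PA PT key A_def
      by (simp add: divide_right_mono)
  qed
  have opt: "optimal_predictor M Y y0 X h \<tau> q"
    unfolding optimal_predictor_def
  proof (intro conjI allI impI h_meas)
    show "calibrated M X h \<tau> q" using PT by (simp add: calibrated_def T_def S_def)
    fix g' \<tau>' assume "g' \<in> borel_measurable borel \<and> calibrated M X g' \<tau>' q"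
    then show "precision M Y y0 X g' \<tau>' \<le> precision M Y y0 X h \<tau>" using main by blast
  qed
  show ?thesis unfolding Let_def using opt unfolding h_def S_def \<tau>_def y0_def FY_def .
qed

end
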